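(* Let $(\Gamma,\rho)$ be a voltage graph with $\Gamma$ strongly connected and $G$ a finite group. Then $(\Gamma,\rho)$ is structurally balanced if and only if $f(c)=\mathbf 1$ for every cycle $c$ of $\Gamma$.
   Context: $\Gamma=(V,E)$ simple digraph, $e_{ij}$ the edge $v_i\to v_j$, $\rho:E\to G$, $\mathbf 1$ the identity. Semi-walk $w=v_{i_1}a_1\dots a_{n-1}v_{i_n}$ with each $a_j\in\{e_{i_ji_{j+1}},e_{i_{j+1}i_j}\}$; walk if all $a_j=e_{i_ji_{j+1}}$; closed if $v_{i_1}=v_{i_n}$. A cycle is a closed walk with no repeated vertices except start equals end (a single vertex is a trivial cycle). Net voltage $f(w)=\bar\rho(a_1)\cdots\bar\rho(a_{n-1})$ with $\bar\rho(a_j)=\rho(a_j)$ for forward edges and $\rho(a_j)^{-1}$ for backward ones ($f=\mathbf 1$ on a single vertex). Structurally balanced: $f(w)=\mathbf 1$ for every closed semi-walk. Strongly connected: for every ordered pair of distinct vertices there is a walk from the first to the second. *)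

theory Defs
  imports "HOL-Algebra.Group"
begin

definition simple_digraph :: "'v set \<Rightarrow> ('v \<times> 'v) set \<Rightarrow> bool" where
  "simple_digraph V E \<longleftrightarrow> finite V \<and> E \<subseteq> V \<times> V \<and> (\<forall>v. (v, v) \<notin> E)"

text \<open>A semi-walk is given by its vertex sequence vs and a list ds of directions:
  ds!k = True means the k-th step uses the edge vs!k -> vs!(k+1) (forward),
  ds!k = False means it uses the edge vs!(k+1) -> vs!k (backward).\<close>
definition semi_walk :: "'v set \<Rightarrow> ('v \<times> 'v) set \<Rightarrow> 'v list \<Rightarrow> bool list \<Rightarrow> bool" where
  "semi_walk V E vs ds \<longleftrightarrow> vs \<noteq> [] \<and> set vs \<subseteq> V \<and> length ds + 1 = length vs \<and>
     (\<forall>k < length ds. if ds ! k then (vs ! k, vs ! Suc k) \<in> E else (vs ! Suc k, vs ! k) \<in> E)"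

definition walk :: "'v set \<Rightarrow> ('v \<times> 'v) set \<Rightarrow> 'v list \<Rightarrow> bool" where
  "walk V E vs \<longleftrightarrow> semi_walk V E vs (replicate (length vs - 1) True)"

definition closed :: "'v list \<Rightarrow> bool" where
  "closed vs \<longleftrightarrow> hd vs = last vs"

text \<open>A cycle: a closed walk with no repeated vertices except start = end
  (a single vertex is a trivial cycle).\<close>
definition cycle :: "'v set \<Rightarrow> ('v \<times> 'v) set \<Rightarrow> 'v list \<Rightarrow> bool" where
  "cycle V E vs \<longleftrightarrow> walk V E vs \<and> closed vs \<and> distinct (tl vs)"

fun net_voltage :: "('g, 'b) monoid_scheme \<Rightarrow> ('v \<times> 'v \<Rightarrow> 'g) \<Rightarrow> 'v list \<Rightarrow> bool list \<Rightarrow> 'g" where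
  "net_voltage G \<rho> (u # v # vs) (d # ds) =
     (if d then \<rho> (u, v) else inv\<^bsub>G\<^esub> (\<rho> (v, u))) \<otimes>\<^bsub>G\<^esub> net_voltage G \<rho> (v # vs) ds"
| "net_voltage G \<rho> _ _ = \<one>\<^bsub>G\<^esub>"

definition structurally_balanced ::
  "('g, 'b) monoid_scheme \<Rightarrow> 'v set \<Rightarrow> ('v \<times> 'v) set \<Rightarrow> ('v \<times> 'v \<Rightarrow> 'g) \<Rightarrow> bool" where
  "structurally_balanced G V E \<rho> \<longleftrightarrow>
     (\<forall>vs ds. semi_walk V E vs ds \<and> closed vs \<longrightarrow> net_voltage G \<rho> vs ds = \<one>\<^bsub>G\<^esub>)"

definition strongly_connected :: "'v set \<Rightarrow> ('v \<times> 'v) set \<Rightarrow> bool" where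
  "strongly_connected V E \<longleftrightarrow>
     (\<forall>u\<in>V. \<forall>v\<in>V. u \<noteq> v \<longrightarrow> (\<exists>vs. walk V E vs \<and> hd vs = u \<and> last vs = v))"

end

theory Submission
  imports Defs
begin

fun wk :: "'v set \<Rightarrow> ('v \<times> 'v) set \<Rightarrow> 'v list \<Rightarrow> bool" where
  "wk V E [] = False"
| "wk V E [v] = (v \<in> V)"
| "wk V E (u # v # vs) = ((u, v) \<in> E \<and> u \<in> V \<and> wk V E (v # vs))"

fun fwv :: "('g, 'b) monoid_scheme \<Rightarrow> ('v \<times> 'v \<Rightarrow> 'g) \<Rightarrow> 'v list \<Rightarrow> 'g" where
  "fwv G \<rho> (u # v # vs) = \<rho> (u, v) \<otimes>\<^bsub>G\<^esub> fwv G \<rho> (v # vs)"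
| "fwv G \<rho> _ = \<one>\<^bsub>G\<^esub>"

lemma semi_walk_Cons2:
  "semi_walk V E (u # v # vs) (d # ds) \<longleftrightarrow>
     u \<in> V \<and> (if d then (u, v) \<in> E else (v, u) \<in> E) \<and> semi_walk V E (v # vs) ds"
  unfolding semi_walk_def
  apply (rule iffI)
   apply (auto simp: less_Suc_eq_0_disj)[1]
  apply (auto simp: less_Suc_eq_0_disj split: if_splits)
  done

lemma semi_walk_single: "semi_walk V E [v] ds \<longleftrightarrow> v \<in> V \<and> ds = []"
  unfolding semi_walk_def by auto

lemma semi_walk_Nil_ds: "semi_walk V E (u # v # vs) [] = False"
  unfolding semi_walk_def by auto

lemma walk_wk: "walk V E vs \<longleftrightarrow> wk V E vs"
proof (induction V E vs rule: wk.induct)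
  case (1 V E) then show ?case by (simp add: walk_def semi_walk_def)
next
  case (2 V E v) then show ?case by (simp add: walk_def semi_walk_single)
next
  case (3 V E u v vs)
  have "replicate (length (u # v # vs) - 1) True = True # replicate (length (v # vs) - 1) True"
    by simp
  then show ?case using 3 by (auto simp add: walk_def semi_walk_Cons2 del: replicate.simps)
qed

lemma nv_fwv: "net_voltage G \<rho> vs (replicate (length vs - 1) True) = fwv G \<rho> vs"
  by (induction G \<rho> vs rule: fwv.induct) auto

lemma wk_append: "wk V E (xs @ y # ys) \<longleftrightarrow> wk V E (xs @ [y]) \<and> wk V E (y # ys)"
proof (induction xs)
  case Nil then show ?case by (cases ys) auto
next
  case (Cons x xs) then show ?case by (cases xs) auto
qed

lemma hd_app: "hd (xs @ [y]) = hd (xs @ y # zs)"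
  by (cases xs) auto

locale vg = group G for G :: "('g, 'b) monoid_scheme" (structure) +
  fixes V :: "'v set" and E :: "('v \<times> 'v) set" and \<rho> :: "'v \<times> 'v \<Rightarrow> 'g"
  assumes rho: "\<rho> \<in> E \<rightarrow> carrier G"
begin

lemma rho_c: "(u, v) \<in> E \<Longrightarrow> \<rho> (u, v) \<in> carrier G"
  using rho by blast

lemma fwv_c: "wk V E vs \<Longrightarrow> fwv G \<rho> vs \<in> carrier G"
  by (induction vs rule: induct_list012) (auto intro!: m_closed rho_c)

lemma fwv_append:
  "wk V E (y # ys) \<Longrightarrow> wk V E (xs @ [y]) \<Longrightarrow>
   fwv G \<rho> (xs @ y # ys) = fwv G \<rho> (xs @ [y]) \<otimes> fwv G \<rho> (y # ys)"
proof (induction xs)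
  case Nil then show ?case using fwv_c by simp
next
  case (Cons x xs)
  show ?case
  proof (cases xs)
    case Nil then show ?thesis using Cons fwv_c rho_c by simp
  next
    case (Cons z zs)
    with Cons.prems Cons.IH show ?thesis
      using fwv_c[of "z # zs @ [y]"] fwv_c[of "y # ys"] rho_c[of x z]
      by (simp add: m_assoc)
  qed
qed

lemma closed_walk:
  assumes cyc: "\<forall>c. cycle V E c \<longrightarrow> fwv G \<rho> c = \<one>"
  shows "wk V E vs \<Longrightarrow> hd vs = last vs \<Longrightarrow> fwv G \<rho> vs = \<one>"
proof (induction "length vs" arbitrary: vs rule: less_induct)
  case less
  obtain a ws where vs: "vs = a # ws" using less.prems by (cases vs) auto
  show ?case
  proof (cases "distinct ws")
    case True
    then have "cycle V E vs" using less.prems vs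
      by (simp add: cycle_def closed_def walk_wk)
    then show ?thesis using cyc by blast
  next
    case False
    then obtain xs ys zs y where ws: "ws = xs @ [y] @ ys @ [y] @ zs"
      using not_distinct_decomp by blast
    have vs2: "vs = (a # xs) @ y # (ys @ y # zs)" using vs ws by simp
    have w1: "wk V E ((a # xs) @ [y])" and w2: "wk V E (y # ys @ y # zs)"
      using less.prems(1) wk_append[of V E "a # xs" y "ys @ y # zs"] vs2 by auto
    have w3: "wk V E ((y # ys) @ [y])" and w4: "wk V E (y # zs)"
      using w2 wk_append[of V E "y # ys" y zs] by auto
    have "fwv G \<rho> ((y # ys) @ [y]) = \<one>"
      by (rule less.hyps) (use w3 vs2 in auto)
    have e1: "fwv G \<rho> vs = fwv G \<rho> ((a # xs) @ [y]) \<otimes> fwv G \<rho> (y # ys @ y # zs)"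
      using fwv_append[OF w2 w1] vs2 by simp
    have e2: "fwv G \<rho> (y # ys @ y # zs) = fwv G \<rho> ((y # ys) @ [y]) \<otimes> fwv G \<rho> (y # zs)"
      using fwv_append[OF w4 w3] by simp
    have w5: "wk V E ((a # xs) @ y # zs)" using wk_append[of V E "a # xs" y zs] w1 w4 by simp
    have e3: "fwv G \<rho> ((a # xs) @ y # zs) = fwv G \<rho> ((a # xs) @ [y]) \<otimes> fwv G \<rho> (y # zs)"
      using fwv_append[OF w4 w1] .
    have "fwv G \<rho> ((a # xs) @ y # zs) = \<one>"
      by (rule less.hyps) (use w5 vs2 less.prems(2) in auto)
    note h1 = \<open>fwv G \<rho> ((y # ys) @ [y]) = \<one>\<close>
    have "fwv G \<rho> vs = fwv G \<rho> ((a # xs) @ [y]) \<otimes> (fwv G \<rho> ((y # ys) @ [y]) \<otimes> fwv G \<rho> (y # zs))"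
      using e1 e2 by (simp only:)
    also have "\<dots> = fwv G \<rho> ((a # xs) @ [y]) \<otimes> fwv G \<rho> (y # zs)"
      using h1 fwv_c[OF w4] by (simp only: l_one)
    also have "\<dots> = fwv G \<rho> ((a # xs) @ y # zs)" using e3 by (simp only:)
    finally show ?thesis using \<open>fwv G \<rho> ((a # xs) @ y # zs) = \<one>\<close> by (simp only:)
  qed
qed

lemma potential:
  assumes cyc: "\<forall>c. cycle V E c \<longrightarrow> fwv G \<rho> c = \<one>"
    and sc: "\<forall>v\<in>V. \<exists>vs. wk V E vs \<and> hd vs = r \<and> last vs = v"
    and sc2: "\<forall>v\<in>V. \<exists>vs. wk V E vs \<and> hd vs = v \<and> last vs = r"
    and p_def: "p = (\<lambda>v. fwv G \<rho> (SOME vs. wk V E vs \<and> hd vs = r \<and> last vs = v))"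
  shows "\<And>v. v \<in> V \<Longrightarrow> p v \<in> carrier G"
    and "\<And>u v. (u, v) \<in> E \<Longrightarrow> u \<in> V \<Longrightarrow> v \<in> V \<Longrightarrow> \<rho> (u, v) = inv p u \<otimes> p v"
proof -
  have pw: "wk V E (SOME vs. wk V E vs \<and> hd vs = r \<and> last vs = v) \<and>
      hd (SOME vs. wk V E vs \<and> hd vs = r \<and> last vs = v) = r \<and>
      last (SOME vs. wk V E vs \<and> hd vs = r \<and> last vs = v) = v" if "v \<in> V" for v
    using someI_ex[OF sc[rule_format, OF that]] .
  show pc: "\<And>v. v \<in> V \<Longrightarrow> p v \<in> carrier G"
    using pw fwv_c p_def by blast
  fix u v assume uv: "(u, v) \<in> E" and uV: "u \<in> V" and vV: "v \<in> V"
  define wu where "wu = (SOME vs. wk V E vs \<and> hd vs = r \<and> last vs = u)"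
  define wv where "wv = (SOME vs. wk V E vs \<and> hd vs = r \<and> last vs = v)"
  have wu: "wk V E wu" "hd wu = r" "last wu = u" using pw[OF uV] wu_def by auto
  have wv: "wk V E wv" "hd wv = r" "last wv = v" using pw[OF vV] wv_def by auto
  have pu: "p u = fwv G \<rho> wu" and pv: "p v = fwv G \<rho> wv" using p_def wu_def wv_def by auto
  obtain w' where w': "wk V E w'" "hd w' = v" "last w' = r" using sc2 vV by blast
  obtain t where t: "w' = v # t" using w' by (cases w') auto
  obtain bu where wun: "wu = bu @ [u]" using wu by (metis append_butlast_last_id wk.simps(1))
  obtain bv where wvn: "wv = bv @ [v]" using wv by (metis append_butlast_last_id wk.simps(1))
  have wuvt: "wk V E (u # v # t)" using uv uV w' t by simp
  have c1: "wk V E (bu @ u # v # t)" using wk_append[of V E bu u "v # t"] wu(1) wun wuvt by simp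
  have c1v: "fwv G \<rho> (bu @ u # v # t) = p u \<otimes> (\<rho> (u, v) \<otimes> fwv G \<rho> (v # t))"
    using fwv_append[OF wuvt, of "bu"] wu(1) wun pu by simp
  have "hd (bu @ u # v # t) = r" using hd_app[of "bu" u "v # t"] wun wu(2) by simp
  moreover have "last (bu @ u # v # t) = r" using w' t by simp
  ultimately have e1: "p u \<otimes> (\<rho> (u, v) \<otimes> fwv G \<rho> (v # t)) = \<one>"
    using closed_walk[OF cyc c1] c1v by simp
  have wvt: "wk V E (v # t)" using w' t by simp
  have c2: "wk V E (bv @ v # t)" using wk_append[of V E bv v t] wv(1) wvn wvt by simp
  have c2v: "fwv G \<rho> (bv @ v # t) = p v \<otimes> fwv G \<rho> (v # t)"
    using fwv_append[OF wvt, of "bv"] wv(1) wvn pv by simp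
  have "hd (bv @ v # t) = r" using hd_app[of "bv" v t] wvn wv(2) by simp
  moreover have "last (bv @ v # t) = r" using w' t by simp
  ultimately have e2: "p v \<otimes> fwv G \<rho> (v # t) = \<one>"
    using closed_walk[OF cyc c2] c2v by simp
  have qc: "fwv G \<rho> (v # t) \<in> carrier G" using fwv_c wvt by blast
  have rc: "\<rho> (u, v) \<in> carrier G" using rho_c uv .
  have q: "inv (fwv G \<rho> (v # t)) = p v" using inv_equality[OF e2 qc pc[OF vV]] .
  have "inv (\<rho> (u, v) \<otimes> fwv G \<rho> (v # t)) = p u"
    using inv_equality[OF e1 _ pc[OF uV]] qc rc by simp
  then have "inv (fwv G \<rho> (v # t)) \<otimes> inv (\<rho> (u, v)) = p u"
    using inv_mult_group qc rc by simp
  then have "p v \<otimes> inv (\<rho> (u, v)) = p u" using q by simp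
  then have "inv (p u) \<otimes> (p v \<otimes> inv (\<rho> (u, v))) = \<one>"
    using pc uV vV rc by simp
  then have "inv (p u) \<otimes> p v \<otimes> inv (\<rho> (u, v)) = \<one>"
    using pc uV vV rc by (simp add: m_assoc)
  then have "inv (inv (\<rho> (u, v))) = inv (p u) \<otimes> p v"
    using inv_equality pc uV vV rc by (metis inv_closed m_closed)
  then show "\<rho> (u, v) = inv p u \<otimes> p v" using rc by simp
qed

lemma telescope:
  assumes pc: "\<And>v. v \<in> V \<Longrightarrow> p v \<in> carrier G"
    and pe: "\<And>u v. (u, v) \<in> E \<Longrightarrow> u \<in> V \<Longrightarrow> v \<in> V \<Longrightarrow> \<rho> (u, v) = inv p u \<otimes> p v"
  shows "semi_walk V E vs ds \<Longrightarrow> net_voltage G \<rho> vs ds = inv p (hd vs) \<otimes> p (last vs)"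
proof (induction ds arbitrary: vs)
  case Nil
  then obtain v where "vs = [v]" "v \<in> V"
    by (cases vs rule: remdups_adj.cases) (auto simp: semi_walk_single semi_walk_Nil_ds semi_walk_def)
  then show ?case using pc by simp
next
  case (Cons d ds)
  then obtain u v ws where vs: "vs = u # v # ws"
    by (cases vs rule: remdups_adj.cases) (auto simp: semi_walk_single semi_walk_def)
  have sw: "u \<in> V" "if d then (u, v) \<in> E else (v, u) \<in> E" "semi_walk V E (v # ws) ds"
    using Cons.prems unfolding vs semi_walk_Cons2 by (auto split: if_splits)
  have vV: "v \<in> V" using sw(3) by (simp add: semi_walk_def)
  have lV: "last (v # ws) \<in> V" using sw(3) unfolding semi_walk_def by auto
  have IH: "net_voltage G \<rho> (v # ws) ds = inv p v \<otimes> p (last (v # ws))"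
    using Cons.IH[OF sw(3)] by simp
  have step: "(if d then \<rho> (u, v) else inv (\<rho> (v, u))) = inv p u \<otimes> p v"
  proof (cases d)
    case True then show ?thesis using sw pe vV by simp
  next
    case False
    then have "inv (\<rho> (v, u)) = inv (inv p v \<otimes> p u)" using sw pe vV by simp
    also have "\<dots> = inv p u \<otimes> p v" using pc sw(1) vV by (simp add: inv_mult_group)
    finally show ?thesis using False by simp
  qed
  have "net_voltage G \<rho> vs (d # ds) = (inv p u \<otimes> p v) \<otimes> (inv p v \<otimes> p (last (v # ws)))"
    using vs step IH by simp
  also have "\<dots> = inv p u \<otimes> p (last (v # ws))"
    using pc sw(1) vV lV by (simp add: m_assoc[symmetric]) (simp add: m_assoc)
  finally show ?case using vs by simp
qed

end

theorem corollary1: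
  fixes G :: "('g, 'b) monoid_scheme" and V :: "'v set" and E :: "('v \<times> 'v) set"
    and \<rho> :: "'v \<times> 'v \<Rightarrow> 'g"
  assumes "group G" and "finite (carrier G)"
    and "simple_digraph V E"
    and "\<rho> \<in> E \<rightarrow> carrier G"
    and "strongly_connected V E"
  shows "structurally_balanced G V E \<rho> \<longleftrightarrow>
         (\<forall>c. cycle V E c \<longrightarrow> net_voltage G \<rho> c (replicate (length c - 1) True) = \<one>\<^bsub>G\<^esub>)"
proof -
  interpret vg G V E \<rho> using assms(1,4) by (simp add: vg_def vg_axioms_def)
  show ?thesis
  proof
    assume sb: "structurally_balanced G V E \<rho>"
    show "\<forall>c. cycle V E c \<longrightarrow> net_voltage G \<rho> c (replicate (length c - 1) True) = \<one>\<^bsub>G\<^esub>"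
      using sb unfolding structurally_balanced_def cycle_def walk_def by blast
  next
    assume h: "\<forall>c. cycle V E c \<longrightarrow> net_voltage G \<rho> c (replicate (length c - 1) True) = \<one>\<^bsub>G\<^esub>"
    have cyc: "\<forall>c. cycle V E c \<longrightarrow> fwv G \<rho> c = \<one>\<^bsub>G\<^esub>" using h nv_fwv by metis
    show "structurally_balanced G V E \<rho>"
      unfolding structurally_balanced_def
    proof (intro allI impI)
      fix vs ds assume a: "semi_walk V E vs ds \<and> closed vs"
      define r where "r = hd vs"
      have rV: "r \<in> V" using a unfolding r_def semi_walk_def by (cases vs) auto
      have sc: "\<forall>v\<in>V. \<exists>ws. wk V E ws \<and> hd ws = r \<and> last ws = v"
      proof
        fix v assume "v \<in> V"
        show "\<exists>ws. wk V E ws \<and> hd ws = r \<and> last ws = v"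
        proof (cases "r = v")
          case True then show ?thesis using \<open>v \<in> V\<close> by (intro exI[of _ "[v]"]) simp
        next
          case False then show ?thesis using assms(5) rV \<open>v \<in> V\<close>
            unfolding strongly_connected_def walk_wk by blast
        qed
      qed
      have sc2: "\<forall>v\<in>V. \<exists>ws. wk V E ws \<and> hd ws = v \<and> last ws = r"
      proof
        fix v assume "v \<in> V"
        show "\<exists>ws. wk V E ws \<and> hd ws = v \<and> last ws = r"
        proof (cases "r = v")
          case True then show ?thesis using \<open>v \<in> V\<close> by (intro exI[of _ "[v]"]) simp
        next
          case False then show ?thesis using assms(5) rV \<open>v \<in> V\<close>
            unfolding strongly_connected_def walk_wk by metis
        qed
      qed
      define p where "p = (\<lambda>v. fwv G \<rho> (SOME vs. wk V E vs \<and> hd vs = r \<and> last vs = v))"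
      note P = potential[OF cyc sc sc2 p_def]
      have "net_voltage G \<rho> vs ds = inv\<^bsub>G\<^esub> p (hd vs) \<otimes>\<^bsub>G\<^esub> p (last vs)"
        using telescope[OF P(1) P(2)] a by blast
      moreover have "hd vs = last vs" using a closed_def by blast
      ultimately show "net_voltage G \<rho> vs ds = \<one>\<^bsub>G\<^esub>" using P(1) rV r_def by simp
    qed
  qed
qed

end
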